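(* Let $\mathfrak h\subseteq\Phi^+$ be a Hessenberg set, let $w,v\in W$ and suppose $v$ is a cover of $w$, with $v=s_\alpha w$, $\alpha\in\Phi^+$. Let $\beta\in N_v$. Then: (1) if $\beta\in s_\alpha N_w\cap\Phi^+$, then $\beta\in N^{\mathfrak h}_v$ if and only if $s_\alpha\beta\in N^{\mathfrak h}_w$; (2) if $\beta\in N_w\cap s_\alpha\Phi^-$ and $\beta\in N^{\mathfrak h}_v$, then $\beta\in N^{\mathfrak h}_w$.
   Context: $\Phi$ is a crystallographic root system in a real Euclidean space with base $\Delta$, positive roots $\Phi^+$, $\Phi^-=-\Phi^+$, Weyl group $W$ with length function $\ell$, and $s_\alpha$ the reflection through $\alpha$. Write $\alpha\prec\beta$ if $\beta-\alpha$ is a sum of positive roots. A Hessenberg set is a subset $\mathfrak h\subseteq\Phi^+$ whose complement in $\Phi^+$ is upward closed for $\prec$. For $w\in W$, $N_w=\{\alpha\in\Phi^+: w^{-1}\alpha\in\Phi^-\}$ and $N^{\mathfrak h}_w=\{\alpha\in\Phi^+: w^{-1}\alpha\in-\mathfrak h\}$. For $\alpha\in\Phi^+$ the Bruhat graph has an edge $u\to s_\alpha u$ when $(s_\alpha u)^{-1}\alpha\in\Phi^-$. We say $v$ is a cover of $w$ if $v=s_\alpha w$ for some $\alpha\in\Phi^+$ with $w\to v$ an edge of the Bruhat graph and $\ell(v)=\ell(w)+1$. *)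

theory Defs
  imports "HOL-Analysis.Analysis"
begin

definition reflection :: "'a::euclidean_space \<Rightarrow> 'a \<Rightarrow> 'a" where
  "reflection \<alpha> x = x - ((2 * (x \<bullet> \<alpha>)) / (\<alpha> \<bullet> \<alpha>)) *\<^sub>R \<alpha>"

definition crystallographic_root_system :: "'a::euclidean_space set \<Rightarrow> bool" where
  "crystallographic_root_system \<Phi> \<longleftrightarrow>
     finite \<Phi> \<and> 0 \<notin> \<Phi> \<and> span \<Phi> = UNIV \<and>
     (\<forall>\<alpha>\<in>\<Phi>. \<forall>c::real. c *\<^sub>R \<alpha> \<in> \<Phi> \<longleftrightarrow> c = 1 \<or> c = -1) \<and>
     (\<forall>\<alpha>\<in>\<Phi>. \<forall>\<beta>\<in>\<Phi>. reflection \<alpha> \<beta> \<in> \<Phi>) \<and>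
     (\<forall>\<alpha>\<in>\<Phi>. \<forall>\<beta>\<in>\<Phi>. 2 * (\<beta> \<bullet> \<alpha>) / (\<alpha> \<bullet> \<alpha>) \<in> \<int>)"

definition is_base :: "'a::euclidean_space set \<Rightarrow> 'a set \<Rightarrow> bool" where
  "is_base \<Phi> \<Delta> \<longleftrightarrow> \<Delta> \<subseteq> \<Phi> \<and> independent \<Delta> \<and>
     (\<forall>\<beta>\<in>\<Phi>. \<exists>c::'a \<Rightarrow> int. \<beta> = (\<Sum>\<alpha>\<in>\<Delta>. of_int (c \<alpha>) *\<^sub>R \<alpha>) \<and>
        ((\<forall>\<alpha>\<in>\<Delta>. c \<alpha> \<ge> 0) \<or> (\<forall>\<alpha>\<in>\<Delta>. c \<alpha> \<le> 0)))"

definition pos_roots :: "'a::euclidean_space set \<Rightarrow> 'a set \<Rightarrow> 'a set" where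
  "pos_roots \<Phi> \<Delta> = {\<beta>\<in>\<Phi>. \<exists>c::'a \<Rightarrow> int. \<beta> = (\<Sum>\<alpha>\<in>\<Delta>. of_int (c \<alpha>) *\<^sub>R \<alpha>) \<and>
        (\<forall>\<alpha>\<in>\<Delta>. c \<alpha> \<ge> 0)}"

definition neg_roots :: "'a::euclidean_space set \<Rightarrow> 'a set \<Rightarrow> 'a set" where
  "neg_roots \<Phi> \<Delta> = uminus ` pos_roots \<Phi> \<Delta>"

inductive_set weyl_group :: "'a::euclidean_space set \<Rightarrow> ('a \<Rightarrow> 'a) set" for \<Phi> where
  id: "id \<in> weyl_group \<Phi>"
| step: "w \<in> weyl_group \<Phi> \<Longrightarrow> \<alpha> \<in> \<Phi> \<Longrightarrow> reflection \<alpha> \<circ> w \<in> weyl_group \<Phi>"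

definition weyl_length :: "'a::euclidean_space set \<Rightarrow> ('a \<Rightarrow> 'a) \<Rightarrow> nat" where
  "weyl_length \<Delta> w = (LEAST n. \<exists>as. length as = n \<and> set as \<subseteq> \<Delta> \<and>
       w = foldr (\<lambda>a f. reflection a \<circ> f) as id)"

definition root_prec :: "'a::euclidean_space set \<Rightarrow> 'a set \<Rightarrow> 'a \<Rightarrow> 'a \<Rightarrow> bool" where
  "root_prec \<Phi> \<Delta> \<alpha> \<beta> \<longleftrightarrow> (\<exists>xs. set xs \<subseteq> pos_roots \<Phi> \<Delta> \<and> \<beta> - \<alpha> = sum_list xs)"

definition hessenberg_set :: "'a::euclidean_space set \<Rightarrow> 'a set \<Rightarrow> 'a set \<Rightarrow> bool" where
  "hessenberg_set \<Phi> \<Delta> h \<longleftrightarrow> h \<subseteq> pos_roots \<Phi> \<Delta> \<and>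
     (\<forall>\<gamma>\<in>pos_roots \<Phi> \<Delta> - h. \<forall>\<delta>\<in>pos_roots \<Phi> \<Delta>.
        root_prec \<Phi> \<Delta> \<gamma> \<delta> \<longrightarrow> \<delta> \<in> pos_roots \<Phi> \<Delta> - h)"

definition inv_set :: "'a::euclidean_space set \<Rightarrow> 'a set \<Rightarrow> ('a \<Rightarrow> 'a) \<Rightarrow> 'a set" where
  "inv_set \<Phi> \<Delta> w = {\<alpha>\<in>pos_roots \<Phi> \<Delta>. inv w \<alpha> \<in> neg_roots \<Phi> \<Delta>}"

definition hess_inv_set :: "'a::euclidean_space set \<Rightarrow> 'a set \<Rightarrow> 'a set \<Rightarrow> ('a \<Rightarrow> 'a) \<Rightarrow> 'a set" where
  "hess_inv_set \<Phi> \<Delta> h w = {\<alpha>\<in>pos_roots \<Phi> \<Delta>. inv w \<alpha> \<in> uminus ` h}"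

definition bruhat_edge :: "'a::euclidean_space set \<Rightarrow> 'a set \<Rightarrow> 'a \<Rightarrow> ('a \<Rightarrow> 'a) \<Rightarrow> bool" where
  "bruhat_edge \<Phi> \<Delta> \<alpha> u \<longleftrightarrow> \<alpha> \<in> pos_roots \<Phi> \<Delta> \<and>
     inv (reflection \<alpha> \<circ> u) \<alpha> \<in> neg_roots \<Phi> \<Delta>"

definition is_cover :: "'a::euclidean_space set \<Rightarrow> 'a set \<Rightarrow> ('a \<Rightarrow> 'a) \<Rightarrow> 'a \<Rightarrow> ('a \<Rightarrow> 'a) \<Rightarrow> bool" where
  "is_cover \<Phi> \<Delta> v \<alpha> w \<longleftrightarrow> \<alpha> \<in> pos_roots \<Phi> \<Delta> \<and> v = reflection \<alpha> \<circ> w \<and>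
     bruhat_edge \<Phi> \<Delta> \<alpha> w \<and> weyl_length \<Delta> v = weyl_length \<Delta> w + 1"

end

theory Submission
  imports Defs
begin

lemma refl_invol: "reflection a (reflection a x) = x"
proof (cases "a = 0")
  case True then show ?thesis by (simp add: reflection_def)
next
  case False
  hence "a \<bullet> a \<noteq> 0" by simp
  then show ?thesis
    by (simp add: reflection_def inner_diff_left algebra_simps)
qed

lemma refl_linear: "linear (reflection a)"
  by (rule linearI) (simp_all add: reflection_def inner_add_left algebra_simps add_divide_distrib)

lemma refl_bij: "bij (reflection a)"
  by (rule involuntory_imp_bij) (rule refl_invol)

lemma refl_inv: "inv (reflection a) = reflection a"
  by (rule inv_unique_comp) (auto simp: refl_invol)

lemma weyl_bl: "w \<in> weyl_group \<Phi> \<Longrightarrow> linear w \<and> bij w"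
proof (induction rule: weyl_group.induct)
  case id then show ?case by (simp add: id_def[symmetric] linear_id)
next
  case (step w a)
  then show ?case using refl_linear refl_bij linear_compose bij_comp by blast
qed

lemma sum_list_rep: "sum_list (replicate n x) = real n *\<^sub>R (x::'a::real_vector)"
  by (induct n) (auto simp: algebra_simps)

lemma no_zero_comb:
  assumes cr: "crystallographic_root_system \<Phi>" and b: "is_base \<Phi> \<Delta>"
    and p: "p \<in> pos_roots \<Phi> \<Delta>" and y: "y \<in> pos_roots \<Phi> \<Delta>" and z: "z \<in> pos_roots \<Phi> \<Delta>"
    and m: "(m::int) \<ge> 0" and eq: "p + y + of_int m *\<^sub>R z = 0"
  shows False
proof -
  obtain cp where cp: "p = (\<Sum>a\<in>\<Delta>. of_int (cp a) *\<^sub>R a)" "\<forall>a\<in>\<Delta>. cp a \<ge> 0" "p \<in> \<Phi>"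
    using p unfolding pos_roots_def by blast
  obtain cy where cy: "y = (\<Sum>a\<in>\<Delta>. of_int (cy a) *\<^sub>R a)" "\<forall>a\<in>\<Delta>. cy a \<ge> 0"
    using y unfolding pos_roots_def by blast
  obtain cz where cz: "z = (\<Sum>a\<in>\<Delta>. of_int (cz a) *\<^sub>R a)" "\<forall>a\<in>\<Delta>. cz a \<ge> 0"
    using z unfolding pos_roots_def by blast
  have fin: "finite \<Delta>" using cr b unfolding crystallographic_root_system_def is_base_def
    using finite_subset by blast
  have ind: "independent \<Delta>" using b unfolding is_base_def by blast
  let ?u = "\<lambda>a. real_of_int (cp a + cy a + m * cz a)"
  have "(\<Sum>a\<in>\<Delta>. ?u a *\<^sub>R a) = p + y + of_int m *\<^sub>R z"
    by (simp add: cp(1) cy(1) cz(1) scaleR_add_left sum.distrib scaleR_sum_right)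
  hence s0: "(\<Sum>a\<in>\<Delta>. ?u a *\<^sub>R a) = 0" using eq by simp
  have u0: "\<forall>a\<in>\<Delta>. ?u a = 0"
    using ind s0 fin by (auto simp: dependent_finite)
  have "\<forall>a\<in>\<Delta>. cp a = 0"
  proof
    fix a assume "a \<in> \<Delta>"
    hence "cp a + cy a + m * cz a = 0" "cp a \<ge> 0" "cy a \<ge> 0" "cz a \<ge> 0"
      using u0 cp cy cz by (auto simp del: of_int_add of_int_mult)
    moreover have "m * cz a \<ge> 0" using m calculation by simp
    ultimately show "cp a = 0" by linarith
  qed
  hence "p = 0" using cp(1) by simp
  thus False using cp(3) cr unfolding crystallographic_root_system_def by blast
qed

theorem proposition2p9:
  fixes \<Phi> \<Delta> h :: "'a::euclidean_space set" and w v :: "'a \<Rightarrow> 'a" and \<alpha> \<beta> :: 'a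
  assumes "crystallographic_root_system \<Phi>"
    and "is_base \<Phi> \<Delta>"
    and "hessenberg_set \<Phi> \<Delta> h"
    and "w \<in> weyl_group \<Phi>" and "v \<in> weyl_group \<Phi>"
    and "is_cover \<Phi> \<Delta> v \<alpha> w"
    and "\<beta> \<in> inv_set \<Phi> \<Delta> v"
  shows "(\<beta> \<in> reflection \<alpha> ` inv_set \<Phi> \<Delta> w \<inter> pos_roots \<Phi> \<Delta> \<longrightarrow>
            (\<beta> \<in> hess_inv_set \<Phi> \<Delta> h v \<longleftrightarrow> reflection \<alpha> \<beta> \<in> hess_inv_set \<Phi> \<Delta> h w))
       \<and> (\<beta> \<in> inv_set \<Phi> \<Delta> w \<inter> reflection \<alpha> ` neg_roots \<Phi> \<Delta> \<and> \<beta> \<in> hess_inv_set \<Phi> \<Delta> h v \<longrightarrow>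
            \<beta> \<in> hess_inv_set \<Phi> \<Delta> h w)"
proof -
  note cr = assms(1) and b = assms(2) and hs = assms(3)
  have wl: "linear w" and wb: "bij w" using weyl_bl[OF assms(4)] by auto
  have cov: "\<alpha> \<in> pos_roots \<Phi> \<Delta>" "v = reflection \<alpha> \<circ> w" "bruhat_edge \<Phi> \<Delta> \<alpha> w"
    using assms(6) unfolding is_cover_def by auto
  have invv: "inv v = inv w \<circ> reflection \<alpha>"
    using cov(2) o_inv_distrib[OF refl_bij wb] refl_inv by metis
  have iwl: "linear (inv w)" using inj_linear_imp_inv_linear[OF wl] wb bij_is_inj by blast
  have P1: "\<beta> \<in> reflection \<alpha> ` inv_set \<Phi> \<Delta> w \<inter> pos_roots \<Phi> \<Delta> \<longrightarrow>
            (\<beta> \<in> hess_inv_set \<Phi> \<Delta> h v \<longleftrightarrow> reflection \<alpha> \<beta> \<in> hess_inv_set \<Phi> \<Delta> h w)"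
  proof
    assume a: "\<beta> \<in> reflection \<alpha> ` inv_set \<Phi> \<Delta> w \<inter> pos_roots \<Phi> \<Delta>"
    then obtain g where g: "g \<in> inv_set \<Phi> \<Delta> w" "\<beta> = reflection \<alpha> g" by blast
    have "reflection \<alpha> \<beta> = g" using g refl_invol by simp
    hence "reflection \<alpha> \<beta> \<in> pos_roots \<Phi> \<Delta>" using g(1) unfolding inv_set_def by simp
    then show "\<beta> \<in> hess_inv_set \<Phi> \<Delta> h v \<longleftrightarrow> reflection \<alpha> \<beta> \<in> hess_inv_set \<Phi> \<Delta> h w"
      using a invv unfolding hess_inv_set_def by auto
  qed
  have P2: "\<beta> \<in> inv_set \<Phi> \<Delta> w \<inter> reflection \<alpha> ` neg_roots \<Phi> \<Delta> \<and> \<beta> \<in> hess_inv_set \<Phi> \<Delta> h v \<longrightarrow>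
            \<beta> \<in> hess_inv_set \<Phi> \<Delta> h w"
  proof
    assume a: "\<beta> \<in> inv_set \<Phi> \<Delta> w \<inter> reflection \<alpha> ` neg_roots \<Phi> \<Delta> \<and> \<beta> \<in> hess_inv_set \<Phi> \<Delta> h v"
    have bpos: "\<beta> \<in> pos_roots \<Phi> \<Delta>" and bw: "inv w \<beta> \<in> neg_roots \<Phi> \<Delta>"
      using a unfolding inv_set_def by auto
    obtain d where d: "d \<in> neg_roots \<Phi> \<Delta>" "\<beta> = reflection \<alpha> d" using a by blast
    have sb: "reflection \<alpha> \<beta> = d" using d refl_invol by simp
    obtain p where p: "p \<in> pos_roots \<Phi> \<Delta>" "d = - p" using d(1) unfolding neg_roots_def by blast
    have hv: "inv w (reflection \<alpha> \<beta>) \<in> uminus ` h" using a invv unfolding hess_inv_set_def by auto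
    have aPhi: "\<alpha> \<in> \<Phi>" "\<beta> \<in> \<Phi>" using cov(1) bpos unfolding pos_roots_def by auto
    then obtain m where m: "2 * (\<beta> \<bullet> \<alpha>) / (\<alpha> \<bullet> \<alpha>) = of_int m"
      using cr unfolding crystallographic_root_system_def by (meson Ints_cases)
    have sbe: "reflection \<alpha> \<beta> = \<beta> - of_int m *\<^sub>R \<alpha>" using m by (simp add: reflection_def)
    have m1: "m \<ge> 1"
    proof (rule ccontr)
      assume "\<not> m \<ge> 1"
      hence "-m \<ge> 0" by simp
      moreover have "p + \<beta> + of_int (-m) *\<^sub>R \<alpha> = 0"
        using sbe sb p(2) by (simp add: algebra_simps)
      ultimately show False using no_zero_comb[OF cr b p(1) bpos cov(1)] by blast
    qed
    have "inv (reflection \<alpha> \<circ> w) \<alpha> \<in> neg_roots \<Phi> \<Delta>" using cov(3) unfolding bruhat_edge_def by blast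
    moreover have "inv (reflection \<alpha> \<circ> w) \<alpha> = - inv w \<alpha>"
    proof -
      have "reflection \<alpha> \<alpha> = - \<alpha>"
      proof (cases "\<alpha> = 0")
        case True then show ?thesis by (simp add: reflection_def)
      next
        case False then show ?thesis by (simp add: reflection_def algebra_simps scaleR_2)
      qed
      thus ?thesis using invv cov(2) linear_neg[OF iwl] by simp
    qed
    ultimately obtain q where q: "q \<in> pos_roots \<Phi> \<Delta>" "- inv w \<alpha> = - q" unfolding neg_roots_def by auto
    hence wa: "inv w \<alpha> = q" by simp
    obtain dd where dd: "dd \<in> pos_roots \<Phi> \<Delta>" "inv w \<beta> = - dd" using bw unfolding neg_roots_def by blast
    obtain g where g: "g \<in> h" "inv w (reflection \<alpha> \<beta>) = - g" using hv by blast
    have hpos: "h \<subseteq> pos_roots \<Phi> \<Delta>" using hs unfolding hessenberg_set_def by blast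
    have "inv w (reflection \<alpha> \<beta>) = inv w \<beta> - of_int m *\<^sub>R inv w \<alpha>"
      using sbe linear_diff[OF iwl] linear_scale[OF iwl] by simp
    hence "g - dd = of_int m *\<^sub>R q" using g(2) dd(2) wa by (simp add: algebra_simps)
    also have "\<dots> = sum_list (replicate (nat m) q)" using m1 by (simp add: sum_list_rep)
    finally have "root_prec \<Phi> \<Delta> dd g" unfolding root_prec_def using q(1)
      by (intro exI[of _ "replicate (nat m) q"]) auto
    hence "dd \<in> h"
      using hs g(1) hpos dd(1) unfolding hessenberg_set_def by blast
    thus "\<beta> \<in> hess_inv_set \<Phi> \<Delta> h w" using bpos dd(2) unfolding hess_inv_set_def by auto
  qed
  show ?thesis using P1 P2 by blast
qed

end
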